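(* Let $0<q<1$, $s\ge1$, $\alpha\in\mathbb{R}\setminus\mathbb{Z}_-$. For $j=1,\dots,s-1$ let $a_j>0$, $c_j>0$ be real and $b_j,d_j\in\mathbb{C}$ with $a_jn+\mathrm{Re}(b_j)\notin\mathbb{Z}_-$ and $c_jn+\mathrm{Re}(d_j)\notin\mathbb{Z}_-$ for all positive integers $n$ (for $s=1$ there are no such parameters). Then, uniformly on compact subsets of $\mathbb{C}$, $$\lim_{n\to+\infty}{}_s\phi_s\!\left(\begin{array}{c}q^{-n},q^{a_1n+b_1},\dots,q^{a_{s-1}n+b_{s-1}}\\ q^{\alpha},q^{c_1n+d_1},\dots,q^{c_{s-1}n+d_{s-1}}\end{array};q,q^nz\right)={}_0\phi_1\!\left(\begin{array}{c}-\\ q^{\alpha}\end{array};q,z\right)=\left(\frac{-z}{(q-1)^2q^{\alpha}}\right)^{\frac{1-\alpha}{2}}\Gamma_q(\alpha)\,J^{(2)}_{\alpha-1}\!\left(2\sqrt{\frac{-z}{q^{\alpha}}};q\right),$$ where in the last expression powers and square roots are taken with principal branches and the expression is understood as the entire function given by the ${}_0\phi_1$.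
   Context: $\mathbb{Z}_-=\{0,-1,-2,\dots\}$. For $w\in\mathbb{C}$, $q^{w}:=e^{w\ln q}$. For $a\in\mathbb{C}$: $(a;q)_0=1$, $(a;q)_k=\prod_{j=0}^{k-1}(1-aq^{j})$, $(a;q)_\infty=\prod_{j\ge0}(1-aq^{j})$, and $(a_1,\dots,a_r;q)_k=\prod_{i=1}^r(a_i;q)_k$. The basic hypergeometric series is $${}_r\phi_s\!\left(\begin{array}{c}a_1,\dots,a_r\\ b_1,\dots,b_s\end{array};q,z\right)=\sum_{k=0}^{\infty}\frac{(a_1,\dots,a_r;q)_k}{(b_1,\dots,b_s;q)_k}(-1)^{(1+s-r)k}q^{(1+s-r)\binom{k}{2}}\frac{z^k}{(q;q)_k};$$ "$-$" denotes an empty parameter list. The $q$-Gamma function is $\Gamma_q(z)=\dfrac{(q;q)_\infty}{(q^{z};q)_\infty}(1-q)^{1-z}$. The $q$-Bessel function is $J^{(2)}_{\nu}(x;q)=\dfrac{(q^{\nu+1};q)_\infty}{(q;q)_\infty}\left(\dfrac{x}{2}\right)^{\nu}{}_0\phi_1\!\left(\begin{array}{c}-\\ q^{\nu+1}\end{array};q,-\dfrac{q^{\nu+1}x^2}{4}\right)$. *)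

theory Defs
  imports "HOL-Analysis.Analysis"
begin

definition rpowc :: "real \<Rightarrow> complex \<Rightarrow> complex" where
  "rpowc b w = exp (w * of_real (ln b))"

definition qpoch :: "complex \<Rightarrow> real \<Rightarrow> nat \<Rightarrow> complex" where
  "qpoch a q k = (\<Prod>j<k. 1 - a * of_real (q ^ j))"

definition qpoch_inf :: "complex \<Rightarrow> real \<Rightarrow> complex" where
  "qpoch_inf a q = prodinf (\<lambda>j. 1 - a * of_real (q ^ j))"

definition qhyp :: "complex list \<Rightarrow> complex list \<Rightarrow> real \<Rightarrow> complex \<Rightarrow> complex" where
  "qhyp as bs q z =
     (let e = 1 + int (length bs) - int (length as) in
      (\<Sum>k. prod_list (map (\<lambda>a. qpoch a q k) as) / prod_list (map (\<lambda>b. qpoch b q k) bs)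
            * ((-1) powi (e * int k)) * of_real (q powr (real_of_int e * real (k choose 2)))
            * z ^ k / qpoch (of_real q) q k))"

definition qGamma :: "real \<Rightarrow> complex \<Rightarrow> complex" where
  "qGamma q w = qpoch_inf (of_real q) q / qpoch_inf (rpowc q w) q * rpowc (1 - q) (1 - w)"

definition qBessel2 :: "real \<Rightarrow> complex \<Rightarrow> complex \<Rightarrow> complex" where
  "qBessel2 q \<nu> x = qpoch_inf (rpowc q (\<nu> + 1)) q / qpoch_inf (of_real q) q * (x / 2) powr \<nu>
     * qhyp [] [rpowc q (\<nu> + 1)] q (- rpowc q (\<nu> + 1) * x\<^sup>2 / 4)"

end

theory Submission
  imports Defs
begin


lemma uniform_tannery:
  fixes A :: "nat \<Rightarrow> nat \<Rightarrow> complex" and B :: "nat \<Rightarrow> complex" and M :: "nat \<Rightarrow> real"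
  assumes lim: "\<And>k. (\<lambda>n. A n k) \<longlonglongrightarrow> B k"
    and bound: "eventually (\<lambda>n. \<forall>k. norm (A n k) \<le> M k) sequentially"
    and summ: "\<And>R. summable (\<lambda>k. M k * R ^ k)"
    and K: "compact K"
  shows "uniform_limit K (\<lambda>n z. \<Sum>k. A n k * z ^ k) (\<lambda>z. \<Sum>k. B k * z ^ k) sequentially"
proof -
  obtain R where R: "R > 0" "\<And>z. z \<in> K \<Longrightarrow> norm z \<le> R"
    using compact_imp_bounded[OF K] unfolding bounded_pos by auto
  have BM: "norm (B k) \<le> M k" for k
  proof (rule tendsto_upperbound)
    show "((\<lambda>n. norm (A n k)) \<longlongrightarrow> norm (B k)) sequentially"
      by (intro tendsto_intros lim)
    show "eventually (\<lambda>n. norm (A n k) \<le> M k) sequentially"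
      using bound by (rule eventually_mono) auto
  qed simp
  define D where "D = (\<lambda>k n. norm (A n k - B k) * R ^ k)"
  have T: "eventually (\<lambda>n. summable (\<lambda>k. norm (D k n))) sequentially \<and>
           summable (\<lambda>n. norm ((\<lambda>_. 0::real) n)) \<and>
           ((\<lambda>n. suminf (\<lambda>k. D k n)) \<longlongrightarrow> suminf (\<lambda>_. 0::real)) sequentially"
  proof (rule tannerys_theorem[where M = "\<lambda>k. 2 * (M k * R ^ k)"])
    show "((\<lambda>n. D k n) \<longlongrightarrow> 0) sequentially" for k
    proof -
      have "((\<lambda>n. norm (A n k - B k) * R ^ k) \<longlongrightarrow> norm (B k - B k) * R ^ k) sequentially"
        by (intro tendsto_intros lim)
      then show ?thesis by (simp add: D_def)
    qed
    show "eventually (\<lambda>(k,n). norm (D k n) \<le> 2 * (M k * R ^ k)) (at_top \<times>\<^sub>F sequentially)"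
      unfolding eventually_prod_filter
    proof (intro exI conjI)
      show "eventually (\<lambda>_. True) at_top" by simp
      show "eventually (\<lambda>n. \<forall>k. norm (A n k) \<le> M k) sequentially" by (rule bound)
      show "\<forall>k n. True \<longrightarrow> (\<forall>k. norm (A n k) \<le> M k) \<longrightarrow> (case (k, n) of (k, n) \<Rightarrow> norm (D k n) \<le> 2 * (M k * R ^ k))"
      proof (intro allI impI, clarsimp)
        fix k n assume h: "\<forall>k. norm (A n k) \<le> M k"
        have "norm (A n k - B k) \<le> 2 * M k"
          using norm_triangle_ineq4[of "A n k" "B k"] spec[OF h, of k] BM[of k] by linarith
        then have "norm (A n k - B k) * R ^ k \<le> 2 * M k * R ^ k"
          using R by (intro mult_right_mono) auto
        then show "\<bar>D k n\<bar> \<le> 2 * (M k * R ^ k)" using R by (simp add: D_def)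
      qed
    qed
    show "summable (\<lambda>k. 2 * (M k * R ^ k))" by (intro summable_mult summ)
  qed simp
  have Bs: "summable (\<lambda>k. B k * z ^ k)" if "norm z \<le> R" for z
  proof (rule summable_comparison_test[OF _ summ[of R]])
    show "\<exists>N. \<forall>k\<ge>N. norm (B k * z ^ k) \<le> M k * R ^ k"
    proof (intro exI allI impI)
      fix k :: nat
      have "norm (B k) * norm z ^ k \<le> M k * R ^ k"
        using BM[of k] that R by (intro mult_mono power_mono) (auto intro: order_trans[OF norm_ge_zero])
      then show "norm (B k * z ^ k) \<le> M k * R ^ k" by (simp add: norm_mult norm_power)
    qed
  qed
  show ?thesis
  proof (rule uniform_limitI)
    fix e :: real assume e: "e > 0"
    have "eventually (\<lambda>n. suminf (\<lambda>k. D k n) < e) sequentially"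
      using T e by (auto simp: order_tendsto_iff)
    moreover have "eventually (\<lambda>n. summable (\<lambda>k. norm (D k n))) sequentially" using T by blast
    ultimately show "\<forall>\<^sub>F n in sequentially. \<forall>z\<in>K. dist (\<Sum>k. A n k * z ^ k) (\<Sum>k. B k * z ^ k) < e"
    proof eventually_elim
      case (elim n)
      show ?case
      proof
        fix z assume z: "z \<in> K"
        have nz: "norm z \<le> R" using R z by auto
        have Dn: "summable (\<lambda>k. D k n)" using elim R by (simp add: D_def)
        have le: "norm ((A n k - B k) * z ^ k) \<le> D k n" for k
          using nz R by (auto simp: D_def norm_mult norm_power intro!: mult_left_mono power_mono)
        have S1: "summable (\<lambda>k. (A n k - B k) * z ^ k)"
          by (rule summable_comparison_test[OF _ Dn]) (use le in auto)
        have S2: "summable (\<lambda>k. B k * z ^ k)" using Bs nz by auto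
        have S3: "summable (\<lambda>k. A n k * z ^ k)"
          using summable_add[OF S1 S2] by (simp add: algebra_simps)
        have "(\<Sum>k. A n k * z ^ k) - (\<Sum>k. B k * z ^ k) = (\<Sum>k. (A n k - B k) * z ^ k)"
          using suminf_diff[OF S3 S2] by (simp add: algebra_simps)
        moreover have "norm (\<Sum>k. (A n k - B k) * z ^ k) \<le> (\<Sum>k. D k n)"
        proof -
          have SN: "summable (\<lambda>k. norm ((A n k - B k) * z ^ k))"
            by (rule summable_comparison_test[OF _ Dn]) (use le in auto)
          have "norm (\<Sum>k. (A n k - B k) * z ^ k) \<le> (\<Sum>k. norm ((A n k - B k) * z ^ k))"
            by (rule summable_norm[OF SN])
          also have "\<dots> \<le> (\<Sum>k. D k n)"
            by (rule suminf_le[OF le SN Dn])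
          finally show ?thesis .
        qed
        ultimately show "dist (\<Sum>k. A n k * z ^ k) (\<Sum>k. B k * z ^ k) < e"
          using elim by (simp add: dist_norm)
      qed
    qed
  qed
qed



lemma rpowc_real: "0 < q \<Longrightarrow> rpowc q (of_real x) = of_real (q powr x)"
  unfolding rpowc_def powr_def by (simp flip: of_real_mult exp_of_real)

lemma norm_rpowc: "0 < q \<Longrightarrow> norm (rpowc q w) = q powr Re w"
  unfolding rpowc_def powr_def by (simp add: norm_exp_eq_Re)

lemma rpowc_nz: "rpowc q w \<noteq> 0" by (simp add: rpowc_def)

lemma qpoch_inf_nz:
  assumes q: "0 < q" "q < 1" and x: "\<And>j. x * of_real (q ^ j) \<noteq> 1"
  shows "qpoch_inf x q \<noteq> 0"
proof -
  have eq: "(\<lambda>j. 1 - x * of_real (q ^ j)) = (\<lambda>j. 1 + (- (x * of_real (q ^ j))))" by simp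
  have "summable (\<lambda>k. norm (- (x * of_real (q ^ k))))"
    using q by (simp add: norm_mult norm_power summable_mult summable_geometric)
  moreover have "- (x * of_real (q ^ k)) \<noteq> -1" for k using x[of k] by simp
  ultimately have "convergent_prod (\<lambda>j. 1 - x * of_real (q ^ j))"
    unfolding eq by (rule summable_imp_convergent_prod_complex)
  moreover have "1 - x * of_real (q ^ j) \<noteq> 0" for j using x[of j] by simp
  ultimately show ?thesis unfolding qpoch_inf_def by (rule prodinf_nonzero)
qed

lemma bessel_part:
  fixes q \<alpha> :: real and z :: complex
  assumes q: "0 < q" "q < 1" and \<alpha>: "\<alpha> \<notin> \<int>\<^sub>\<le>\<^sub>0" and z: "z \<noteq> 0"
  shows "qhyp [] [rpowc q (of_real \<alpha>)] q z =
             ((- z) / (of_real ((q - 1)\<^sup>2) * rpowc q (of_real \<alpha>))) powr (of_real ((1 - \<alpha>) / 2))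
             * qGamma q (of_real \<alpha>)
             * qBessel2 q (of_real (\<alpha> - 1)) (2 * csqrt (- z / rpowc q (of_real \<alpha>)))"
proof -
  define Q where "Q = rpowc q (of_real \<alpha>)"
  have Q0: "Q \<noteq> 0" by (simp add: Q_def rpowc_nz)
  define w where "w = - z / Q"
  have w0: "w \<noteq> 0" using z Q0 by (simp add: w_def)
  have Qa: "rpowc q (of_real (\<alpha> - 1) + 1) = Q" by (simp add: Q_def)
  have arg: "- Q * (2 * csqrt w)\<^sup>2 / 4 = z"
    using Q0 by (simp add: power_mult_distrib w_def)
  have nzq: "qpoch_inf (of_real q) q \<noteq> 0"
  proof (rule qpoch_inf_nz[OF q])
    fix j have "q * q ^ j \<le> q * 1" using q by (intro mult_left_mono power_le_one) auto
    then have "q * q ^ j < 1" using q by linarith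
    then show "complex_of_real q * complex_of_real (q ^ j) \<noteq> 1"
      by (metis less_irrefl of_real_eq_1_iff of_real_mult)
  qed
  have nzQ: "qpoch_inf Q q \<noteq> 0"
  proof (rule qpoch_inf_nz[OF q])
    fix j
    show "Q * complex_of_real (q ^ j) \<noteq> 1"
    proof
      assume "Q * complex_of_real (q ^ j) = 1"
      then have "q powr \<alpha> * q ^ j = 1" using q
        by (simp add: Q_def rpowc_real) (metis of_real_eq_1_iff of_real_mult of_real_power)
      then have "q powr (\<alpha> + real j) = q powr 0"
        using q by (simp add: powr_add powr_realpow)
      then have "\<alpha> + real j = 0" using q by (simp add: powr_inj)
      then have "\<alpha> = - real j" by simp
      then show False using \<alpha> by (simp add: minus_of_nat_in_nonpos_Ints)
    qed
  qed
  have Lsq: "Ln (csqrt w) = Ln w / 2"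
    using w0 mpi_less_Im_Ln[of w] Im_Ln_le_pi[of w] by (simp add: csqrt_exp_Ln)
  have cs0: "csqrt w \<noteq> 0" using w0 by simp
  have eqw: "(- z) / (of_real ((q - 1)\<^sup>2) * Q) = w / of_real ((q - 1)\<^sup>2)"
    by (simp add: w_def)
  have qq: "(q - 1)\<^sup>2 > 0" using q by simp
  have Ldiv: "Ln (w / of_real ((q - 1)\<^sup>2)) = Ln w - of_real (2 * ln (1 - q))"
  proof -
    have "ln ((q - 1)\<^sup>2) = 2 * ln (1 - q)"
      using q ln_realpow[of "1-q" 2] by (simp add: power2_commute)
    then show ?thesis using Ln_divide_of_real[OF qq w0] by simp
  qed
  have X: "(w / of_real ((q - 1)\<^sup>2)) powr (of_real ((1 - \<alpha>) / 2)) * rpowc (1 - q) (1 - of_real \<alpha>)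
           * (2 * csqrt w / 2) powr (of_real (\<alpha> - 1)) = 1"
    using w0 qq cs0
    unfolding powr_def rpowc_def Ldiv
    by (simp add: Lsq flip: exp_add) (simp add: field_simps)
  show ?thesis
    unfolding qGamma_def qBessel2_def Qa arg eqw[folded Q_def] Q_def[symmetric] w_def[symmetric]
    using nzq nzQ X
    by (simp add: field_simps)
qed



lemma prod_list_upt: "prod_list (map f [m..<n]) = prod f {m..<n}"
  using prod.distinct_set_conv_list[of "[m..<n]" f] by simp

lemma choose2_Suc: "(Suc k choose 2) = (k choose 2) + k"
  by (simp add: numeral_2_eq_2)

lemma powr_choose2: "0 < q \<Longrightarrow> q powr real (Suc k choose 2) = q powr real (k choose 2) * q ^ k"
  by (simp add: choose2_Suc powr_add powr_realpow)

lemma powr_2choose2: "0 < (q::real) \<Longrightarrow> q powr (2 * real (k choose 2)) = (\<Prod>j<k. q ^ j * q ^ j)"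
proof (induction k)
  case 0 then show ?case by (simp add: binomial_eq_0)
next
  case (Suc k)
  have "q powr (2 * real (Suc k choose 2)) = q powr (2 * real (k choose 2)) * (q ^ k * q ^ k)"
  proof -
    have e: "2 * real (Suc k choose 2) = 2 * real (k choose 2) + real (k + k)" by (simp add: choose2_Suc)
    show ?thesis unfolding e powr_add powr_realpow[OF Suc.prems] by (simp add: power_add)
  qed
  then show ?case using Suc by simp
qed

lemma qpoch_Suc: "qpoch x q (Suc k) = qpoch x q k * (1 - x * of_real (q ^ k))"
  by (simp add: qpoch_def)

lemma E_closed:
  assumes q: "0 < q"
  shows "qpoch (rpowc q (- of_nat n)) q k * (-1) ^ k * of_real (q powr real (k choose 2)) * of_real (q ^ n) ^ k
         = of_real (\<Prod>j<k. q ^ j * q ^ j - q ^ n * q ^ j)"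
proof (induction k)
  case 0 then show ?case using q by (simp add: qpoch_def binomial_eq_0)
next
  case (Suc k)
  have r: "rpowc q (- of_nat n) = of_real (inverse (q ^ n))"
    using rpowc_real[OF q, of "- real n"] q by (simp add: powr_minus powr_realpow)
  have "qpoch (rpowc q (- of_nat n)) q (Suc k) * (-1) ^ Suc k * of_real (q powr real (Suc k choose 2)) * of_real (q ^ n) ^ Suc k
      = (qpoch (rpowc q (- of_nat n)) q k * (-1) ^ k * of_real (q powr real (k choose 2)) * of_real (q ^ n) ^ k)
        * of_real ((1 - inverse (q ^ n) * q ^ k) * (- (q ^ k * q ^ n)))"
    by (simp add: qpoch_Suc powr_choose2[OF q] r mult_ac)
  also have "(1 - inverse (q ^ n) * q ^ k) * (- (q ^ k * q ^ n)) = q ^ k * q ^ k - q ^ n * q ^ k"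
    using q by (simp add: field_simps)
  finally show ?case using Suc by simp
qed

lemma E_bound:
  fixes q :: real
  assumes q: "0 < q" "q < 1"
  shows "\<bar>\<Prod>j<k. q ^ j * q ^ j - q ^ n * q ^ j\<bar> \<le> (\<Prod>j<k. q ^ j * q ^ j)"
proof (cases "n < k")
  case True
  have Z: "(\<Prod>j<k. q ^ j * q ^ j - q ^ n * q ^ j) = 0"
  proof -
    have "n \<in> {..<k}" using True by simp
    moreover have "q ^ n * q ^ n - q ^ n * q ^ n = 0" by simp
    ultimately show ?thesis by (metis (no_types, lifting) prod_zero_iff finite_lessThan)
  qed
  have "0 \<le> (\<Prod>j<k. q ^ j * q ^ j)" using q by (intro prod_nonneg) auto
  then show ?thesis unfolding Z by simp
next
  case False
  have h: "0 \<le> q ^ j * q ^ j - q ^ n * q ^ j \<and> q ^ j * q ^ j - q ^ n * q ^ j \<le> q ^ j * q ^ j" if "j < k" for j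
  proof -
    have "q ^ n \<le> q ^ j" using q that False by (intro power_decreasing) auto
    then show ?thesis using q by (auto intro!: mult_right_mono)
  qed
  have "0 \<le> (\<Prod>j<k. q ^ j * q ^ j - q ^ n * q ^ j)" using h by (intro prod_nonneg) auto
  moreover have "(\<Prod>j<k. q ^ j * q ^ j - q ^ n * q ^ j) \<le> (\<Prod>j<k. q ^ j * q ^ j)"
    using h by (intro prod_mono) auto
  ultimately show ?thesis by simp
qed

lemma E_lim:
  fixes q :: real
  assumes q: "0 < q" "q < 1"
  shows "(\<lambda>n. \<Prod>j<k. q ^ j * q ^ j - q ^ n * q ^ j) \<longlonglongrightarrow> (\<Prod>j<k. q ^ j * q ^ j)"
proof -
  have "(\<lambda>n. \<Prod>j<k. q ^ j * q ^ j - q ^ n * q ^ j) \<longlonglongrightarrow> (\<Prod>j<k. q ^ j * q ^ j - 0 * q ^ j)"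
  proof -
    have h: "(\<lambda>n. q ^ n) \<longlonglongrightarrow> 0" by (rule LIMSEQ_realpow_zero) (use q in auto)
    show ?thesis by (intro tendsto_intros h)
  qed
  then show ?thesis by simp
qed

lemma sum_geom_le: "0 < q \<Longrightarrow> q < (1::real) \<Longrightarrow> (\<Sum>i<k. q ^ i) \<le> 1 / (1 - q)"
  using sum_le_suminf[OF summable_geometric[of q], of "{..<k}"] suminf_geometric[of q]
  by auto

lemma qpoch_norm_le:
  assumes q: "0 < q" "q < 1"
  shows "norm (qpoch x q k) \<le> exp (norm x / (1 - q))"
proof -
  have "norm (qpoch x q k) \<le> (\<Prod>i<k. norm (1 - x * of_real (q ^ i)))"
    unfolding qpoch_def by (rule norm_prod_le)
  also have "\<dots> \<le> (\<Prod>i<k. exp (norm x * q ^ i))"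
  proof (intro prod_mono conjI)
    fix i
    have "norm (1 - x * of_real (q ^ i)) \<le> 1 + norm x * q ^ i"
      using norm_triangle_ineq4[of 1 "x * of_real (q ^ i)"] q by (simp add: norm_mult norm_power)
    also have "\<dots> \<le> exp (norm x * q ^ i)" by (rule exp_ge_add_one_self[THEN order.trans], simp)
    finally show "norm (1 - x * of_real (q ^ i)) \<le> exp (norm x * q ^ i)" .
  qed simp
  also have "\<dots> = exp (norm x * (\<Sum>i<k. q ^ i))" by (simp add: exp_sum sum_distrib_left)
  also have "\<dots> \<le> exp (norm x / (1 - q))"
    using mult_left_mono[OF sum_geom_le[OF q, of k], of "norm x"] by simp
  finally show ?thesis .
qed

lemma qpoch_norm_ge:
  assumes q: "0 < q" "q < 1" and x: "norm x \<le> (1 - q) / 2"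
  shows "norm (qpoch x q k) \<ge> 1 / 2"
proof -
  have qi: "q ^ i \<le> 1" for i using q by (simp add: power_le_one)
  have nx: "norm x \<le> 1/2" using x q by simp
  have b: "norm x * q ^ i \<in> {0..1}" for i
    using mult_mono[OF nx qi[of i]] q by auto
  have "1 / 2 \<le> 1 - (\<Sum>i<k. norm x * q ^ i)"
  proof -
    have "(\<Sum>i<k. norm x * q ^ i) = norm x * (\<Sum>i<k. q ^ i)" by (simp add: sum_distrib_left)
    also have "\<dots> \<le> norm x * (1 / (1 - q))" by (rule mult_left_mono[OF sum_geom_le[OF q]]) simp
    also have "\<dots> \<le> 1 / 2" using x q by (simp add: field_simps)
    finally show ?thesis by simp
  qed
  also have "\<dots> \<le> (\<Prod>i<k. 1 - norm x * q ^ i)"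
    by (rule Weierstrass_prod_ineq) (use b in auto)
  also have "\<dots> \<le> (\<Prod>i<k. norm (1 - x * of_real (q ^ i)))"
  proof (intro prod_mono conjI)
    fix i
    show "0 \<le> 1 - norm x * q ^ i" using b[of i] by auto
    show "1 - norm x * q ^ i \<le> norm (1 - x * of_real (q ^ i))"
      using norm_triangle_ineq2[of 1 "x * of_real (q ^ i)"] q by (simp add: norm_mult norm_power)
  qed
  also have "\<dots> = norm (qpoch x q k)" unfolding qpoch_def by (rule prod_norm)
  finally show ?thesis .
qed

lemma qpoch_lim0:
  assumes "f \<longlonglongrightarrow> 0"
  shows "(\<lambda>n. qpoch (f n) q k) \<longlonglongrightarrow> 1"
proof -
  have "(\<lambda>n. qpoch (f n) q k) \<longlonglongrightarrow> (\<Prod>i<k. 1 - 0 * of_real (q ^ i))"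
    unfolding qpoch_def by (intro tendsto_intros assms)
  then show ?thesis by simp
qed

lemma rpowc_lin_tendsto:
  assumes q: "0 < q" "q < 1" and a: "a > 0"
  shows "(\<lambda>n. rpowc q (of_real (a * real n) + b)) \<longlonglongrightarrow> 0"
proof -
  have eq: "norm (rpowc q (of_real (a * real n) + b)) = q powr Re b * (q powr a) ^ n" for n
    using q by (simp add: norm_rpowc powr_add powr_powr[symmetric] powr_realpow mult.commute)
  have "q powr a < 1 powr a" using q a by (intro powr_less_mono2) auto
  then have "q powr a < 1" by simp
  then have "(\<lambda>n. q powr Re b * (q powr a) ^ n) \<longlonglongrightarrow> q powr Re b * 0"
    using q by (intro tendsto_intros LIMSEQ_power_zero) auto
  then have "(\<lambda>n. norm (rpowc q (of_real (a * real n) + b))) \<longlonglongrightarrow> 0"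
    by (simp only: eq mult_zero_right)
  then show ?thesis by (simp only: tendsto_norm_zero_iff)
qed

lemma norm_rpowc_lin_le:
  assumes q: "0 < q" "q < 1" and a: "a > 0"
  shows "norm (rpowc q (of_real (a * real n) + b)) \<le> q powr Re b"
proof -
  have "q powr (a * real n + Re b) \<le> q powr Re b"
    using q a by (intro powr_mono') auto
  then show ?thesis using q by (simp add: norm_rpowc)
qed



lemma lhs_rewrite:
  fixes q :: real
  assumes q: "0 < q"
  shows "qhyp (rpowc q (- of_nat n) # map (\<lambda>j. rpowc q (of_real (a j * real n) + b j)) [1..<s])
              (QA # map (\<lambda>j. rpowc q (of_real (c j * real n) + d j)) [1..<s])
              q (of_real (q ^ n) * z)
       = (\<Sum>k. of_real (\<Prod>j<k. q ^ j * q ^ j - q ^ n * q ^ j)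
               * ((\<Prod>j\<in>{1..<s}. qpoch (rpowc q (of_real (a j * real n) + b j)) q k)
                 / (\<Prod>j\<in>{1..<s}. qpoch (rpowc q (of_real (c j * real n) + d j)) q k))
               * (1 / (qpoch QA q k * qpoch (of_real q) q k)) * z ^ k)"
  unfolding qhyp_def Let_def
  apply (rule suminf_cong)
  apply (simp add: map_map o_def prod_list_upt power_mult_distrib power_int_of_nat)
  subgoal for k
  proof -
    have E: "qpoch (rpowc q (- of_nat n)) q k * (-1)^k * of_real (q powr real (k choose 2)) * (of_real q ^ n)^k
       = (\<Prod>x<k. of_real q ^ x * of_real q ^ x - of_real q ^ n * of_real q ^ x)"
      using E_closed[OF q, of n k] by simp
    show ?thesis by (simp only: E[symmetric]) (simp add: mult_ac)
  qed
  done

lemma rhs_rewrite: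
  fixes q :: real
  assumes q: "0 < q"
  shows "qhyp [] [QA] q z = (\<Sum>k. of_real (\<Prod>j<k. q ^ j * q ^ j) * (1 / (qpoch QA q k * qpoch (of_real q) q k)) * z ^ k)"
  unfolding qhyp_def Let_def
  apply (rule suminf_cong)
  subgoal for k using powr_2choose2[OF q, of k] by (simp add: power_int_of_nat)
  done



lemma G_summable:
  fixes q :: real
  assumes q: "0 < q" "q < 1"
  shows "summable (\<lambda>k. ((\<Prod>j<k. q ^ j * q ^ j) * C * norm (1 / (qpoch QA q k * qpoch (of_real q) q k))) * R ^ k)"
proof -
  define G where "G k = norm (1 / (qpoch QA q k * qpoch (of_real q) q k))" for k
  define W where "W k = (\<Prod>j<k. q ^ j * q ^ j) * \<bar>C\<bar> * G k * \<bar>R\<bar> ^ k" for k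
  define n1 where "n1 k = norm (1 - QA * of_real (q ^ k))" for k
  define n2 where "n2 k = norm (1 - (of_real q :: complex) * of_real (q ^ k))" for k
  have W0: "W k \<ge> 0" for k unfolding W_def G_def using q by (intro mult_nonneg_nonneg prod_nonneg) auto
  have Gs: "G (Suc k) = G k / (n1 k * n2 k)" for k
    unfolding G_def n1_def n2_def by (simp add: qpoch_Suc norm_mult norm_divide divide_divide_eq_left mult_ac del: of_real_power)
  have WS: "W (Suc k) = W k * ((q ^ k * q ^ k * \<bar>R\<bar>) / (n1 k * n2 k))" for k
    unfolding W_def Gs by (simp add: field_simps)
  have pz: "(\<lambda>k. q ^ k) \<longlonglongrightarrow> 0" by (rule LIMSEQ_realpow_zero) (use q in auto)
  have t1: "(\<lambda>k. norm QA * q ^ k) \<longlonglongrightarrow> 0" using tendsto_mult[OF tendsto_const pz, of "norm QA"] by simp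
  have t2: "(\<lambda>k. q * q ^ k) \<longlonglongrightarrow> 0" using tendsto_mult[OF tendsto_const pz, of q] by simp
  have t3: "(\<lambda>k. q ^ k * q ^ k * \<bar>R\<bar>) \<longlonglongrightarrow> 0" using tendsto_mult[OF tendsto_mult[OF pz pz] tendsto_const, of "\<bar>R\<bar>"] by simp
  have ev: "eventually (\<lambda>k. norm QA * q ^ k < 1/2 \<and> q * q ^ k < 1/2 \<and> q ^ k * q ^ k * \<bar>R\<bar> < 1/8) sequentially"
    using order_tendstoD(2)[OF t1, of "1/2"] order_tendstoD(2)[OF t2, of "1/2"] order_tendstoD(2)[OF t3, of "1/8"]
    by (intro eventually_conj) auto
  then obtain N where N: "\<And>k. k \<ge> N \<Longrightarrow> norm QA * q ^ k < 1/2 \<and> q * q ^ k < 1/2 \<and> q ^ k * q ^ k * \<bar>R\<bar> < 1/8"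
    unfolding eventually_sequentially by blast
  have sW: "summable W"
  proof (rule summable_ratio_test[of "1/2" N])
    fix k assume k: "k \<ge> N"
    have h1: "n1 k \<ge> 1/2"
      using norm_triangle_ineq2[of 1 "QA * of_real (q ^ k)"] N[OF k] q
      by (simp add: n1_def norm_mult norm_power)
    have h2: "n2 k \<ge> 1/2"
      using norm_triangle_ineq2[of 1 "(of_real q :: complex) * of_real (q ^ k)"] N[OF k] q
      by (simp add: n2_def norm_mult norm_power)
    have "n1 k * n2 k \<ge> 1/2 * (1/2)" using h1 by (intro mult_mono[OF h1 h2]) auto
    then have r: "(q ^ k * q ^ k * \<bar>R\<bar>) / (n1 k * n2 k) \<le> 1/2"
      using N[OF k] by (simp add: divide_le_eq)
    have "W (Suc k) \<le> W k * (1/2)" unfolding WS by (rule mult_left_mono[OF r W0])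
    then show "norm (W (Suc k)) \<le> 1/2 * norm (W k)" using W0[of k] W0[of "Suc k"] by simp
  qed simp
  show ?thesis
  proof (rule summable_comparison_test[OF _ sW])
    show "\<exists>N. \<forall>k\<ge>N. norm ((\<Prod>j<k. q ^ j * q ^ j) * C * norm (1 / (qpoch QA q k * qpoch (of_real q) q k)) * R ^ k) \<le> W k"
      by (intro exI allI impI) (simp add: W_def G_def abs_mult power_abs prod_nonneg)
  qed
qed



lemma limit_part:
  fixes q \<alpha> :: real and s :: nat
    and a c :: "nat \<Rightarrow> real" and b d :: "nat \<Rightarrow> complex"
  assumes q: "0 < q" "q < 1"
    and a: "\<And>j. j \<in> {1..<s} \<Longrightarrow> a j > 0"
    and c: "\<And>j. j \<in> {1..<s} \<Longrightarrow> c j > 0"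
    and K: "compact K"
  shows "uniform_limit K
             (\<lambda>n z. qhyp (rpowc q (- of_nat n) #
                             map (\<lambda>j. rpowc q (of_real (a j * real n) + b j)) [1..<s])
                          (rpowc q (of_real \<alpha>) #
                             map (\<lambda>j. rpowc q (of_real (c j * real n) + d j)) [1..<s])
                          q (of_real (q ^ n) * z))
             (\<lambda>z. qhyp [] [rpowc q (of_real \<alpha>)] q z) sequentially"
proof -
  define QA where "QA = rpowc q (of_real \<alpha>)"
  define G where "G k = 1 / (qpoch QA q k * qpoch (of_real q) q k)" for k
  define El where "El k = (\<Prod>j<k. q ^ j * q ^ j)" for k
  define Ef where "Ef n k = (\<Prod>j<k. q ^ j * q ^ j - q ^ n * q ^ j)" for n k
  define U where "U n k = (\<Prod>j\<in>{1..<s}. qpoch (rpowc q (of_real (a j * real n) + b j)) q k)" for n k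
  define V where "V n k = (\<Prod>j\<in>{1..<s}. qpoch (rpowc q (of_real (c j * real n) + d j)) q k)" for n k
  define A where "A n k = of_real (Ef n k) * (U n k / V n k) * G k" for n k
  define B where "B k = of_real (El k) * G k" for k
  define CU where "CU = (\<Prod>j\<in>{1..<s}. exp (q powr Re (b j) / (1 - q)))"
  define M where "M k = El k * (CU * 2 ^ (s - 1)) * norm (G k)" for k
  have lhs: "(\<lambda>n z. qhyp (rpowc q (- of_nat n) #
                             map (\<lambda>j. rpowc q (of_real (a j * real n) + b j)) [1..<s])
                          (QA # map (\<lambda>j. rpowc q (of_real (c j * real n) + d j)) [1..<s])
                          q (of_real (q ^ n) * z)) = (\<lambda>n z. \<Sum>k. A n k * z ^ k)"
    by (intro ext, subst lhs_rewrite[OF q(1)]) (simp add: A_def Ef_def U_def V_def G_def)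
  have rhs: "(\<lambda>z. qhyp [] [QA] q z) = (\<lambda>z. \<Sum>k. B k * z ^ k)"
    by (intro ext, subst rhs_rewrite[OF q(1)]) (simp add: B_def El_def G_def)
  have lim: "(\<lambda>n. A n k) \<longlonglongrightarrow> B k" for k
  proof -
    have e: "(\<lambda>n. of_real (Ef n k) :: complex) \<longlonglongrightarrow> of_real (El k)"
      unfolding Ef_def El_def by (intro tendsto_of_real E_lim[OF q])
    have u: "(\<lambda>n. U n k) \<longlonglongrightarrow> (\<Prod>j\<in>{1..<s}. 1)"
      unfolding U_def by (intro tendsto_prod qpoch_lim0 rpowc_lin_tendsto[OF q] a)
    have v: "(\<lambda>n. V n k) \<longlonglongrightarrow> (\<Prod>j\<in>{1..<s}. 1)"
      unfolding V_def by (intro tendsto_prod qpoch_lim0 rpowc_lin_tendsto[OF q] c)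
    have "(\<lambda>n. A n k) \<longlonglongrightarrow> of_real (El k) * (1 / 1) * G k"
      unfolding A_def using u v by (intro tendsto_intros e) auto
    then show ?thesis by (simp add: B_def)
  qed
  have evj: "eventually (\<lambda>n. norm (rpowc q (of_real (c j * real n) + d j)) < (1 - q) / 2) sequentially"
    if "j \<in> {1..<s}" for j
  proof -
    have "(\<lambda>n. norm (rpowc q (of_real (c j * real n) + d j))) \<longlonglongrightarrow> 0"
      using rpowc_lin_tendsto[OF q c[OF that], of "d j"] by (simp only: tendsto_norm_zero_iff)
    then show ?thesis using q by (intro order_tendstoD(2)) auto
  qed
  have bound: "eventually (\<lambda>n. \<forall>k. norm (A n k) \<le> M k) sequentially"
  proof -
    have "eventually (\<lambda>n. \<forall>j\<in>{1..<s}. norm (rpowc q (of_real (c j * real n) + d j)) < (1 - q) / 2) sequentially"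
      using evj by (intro eventually_ball_finite) auto
    then show ?thesis
    proof eventually_elim
      case (elim n)
      show ?case
      proof
        fix k
        have Vb: "norm (V n k) \<ge> (1/2) ^ (s - 1)"
        proof -
          have "(1/2::real) ^ (s - 1) = (\<Prod>j\<in>{1..<s}. 1/2)" by simp
          also have "\<dots> \<le> (\<Prod>j\<in>{1..<s}. norm (qpoch (rpowc q (of_real (c j * real n) + d j)) q k))"
          proof (intro prod_mono conjI qpoch_norm_ge q)
            fix j assume "j \<in> {1..<s}"
            then show "norm (rpowc q (of_real (c j * real n) + d j)) \<le> (1 - q) / 2"
              using elim by (meson less_imp_le)
          qed auto
          also have "\<dots> = norm (V n k)" unfolding V_def by (rule prod_norm)
          finally show ?thesis .
        qed
        have Ub: "norm (U n k) \<le> CU"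
        proof -
          have "norm (U n k) = (\<Prod>j\<in>{1..<s}. norm (qpoch (rpowc q (of_real (a j * real n) + b j)) q k))"
            unfolding U_def by (rule prod_norm[symmetric])
          also have "\<dots> \<le> CU" unfolding CU_def
          proof (intro prod_mono conjI)
            fix j assume j: "j \<in> {1..<s}"
            have "norm (qpoch (rpowc q (of_real (a j * real n) + b j)) q k)
                  \<le> exp (norm (rpowc q (of_real (a j * real n) + b j)) / (1 - q))"
              by (rule qpoch_norm_le[OF q])
            also have "\<dots> \<le> exp (q powr Re (b j) / (1 - q))"
              using norm_rpowc_lin_le[OF q a[OF j], of n "b j"] q by (simp add: divide_right_mono)
            finally show "norm (qpoch (rpowc q (of_real (a j * real n) + b j)) q k) \<le> exp (q powr Re (b j) / (1 - q))" .
          qed simp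
          finally show ?thesis .
        qed
        have UV: "norm (U n k / V n k) \<le> CU * 2 ^ (s - 1)"
        proof -
          have p: "(0::real) < (1/2) ^ (s - 1)" by simp
          have "norm (U n k / V n k) = norm (U n k) / norm (V n k)" by (simp add: norm_divide)
          also have "\<dots> \<le> CU / (1/2) ^ (s - 1)"
            using Ub Vb p order_trans[OF norm_ge_zero Ub] by (intro frac_le) auto
          also have "\<dots> = CU * 2 ^ (s - 1)" by (simp add: power_one_over)
          finally show ?thesis .
        qed
        have Eb: "norm (of_real (Ef n k) :: complex) \<le> El k"
          unfolding Ef_def El_def norm_of_real using E_bound[OF q, of n k] .
        have "norm (A n k) = norm (of_real (Ef n k) :: complex) * norm (U n k / V n k) * norm (G k)"
          unfolding A_def norm_mult ..
        also have "\<dots> \<le> El k * (CU * 2 ^ (s - 1)) * norm (G k)"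
          using q by (intro mult_right_mono mult_mono Eb UV) (auto simp: El_def intro!: prod_nonneg)
        finally show "norm (A n k) \<le> M k" by (simp add: M_def)
      qed
    qed
  qed
  have summ: "summable (\<lambda>k. M k * R ^ k)" for R
    unfolding M_def El_def G_def by (rule G_summable[OF q])
  have "uniform_limit K (\<lambda>n z. \<Sum>k. A n k * z ^ k) (\<lambda>z. \<Sum>k. B k * z ^ k) sequentially"
    by (rule uniform_tannery[OF lim bound summ K])
  then show ?thesis using lhs rhs by (simp add: QA_def)
qed


theorem proposition5:
  fixes q \<alpha> :: real and s :: nat
    and a c :: "nat \<Rightarrow> real" and b d :: "nat \<Rightarrow> complex"
  assumes q: "0 < q" "q < 1"
    and s: "s \<ge> 1"
    and \<alpha>: "\<alpha> \<notin> \<int>\<^sub>\<le>\<^sub>0"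
    and a: "\<And>j. j \<in> {1..<s} \<Longrightarrow> a j > 0"
    and c: "\<And>j. j \<in> {1..<s} \<Longrightarrow> c j > 0"
    and ab: "\<And>j n. j \<in> {1..<s} \<Longrightarrow> n \<ge> 1 \<Longrightarrow> a j * real n + Re (b j) \<notin> \<int>\<^sub>\<le>\<^sub>0"
    and cd: "\<And>j n. j \<in> {1..<s} \<Longrightarrow> n \<ge> 1 \<Longrightarrow> c j * real n + Re (d j) \<notin> \<int>\<^sub>\<le>\<^sub>0"
  shows "(\<forall>K. compact K \<longrightarrow>
           uniform_limit K
             (\<lambda>n z. qhyp (rpowc q (- of_nat n) #
                             map (\<lambda>j. rpowc q (of_real (a j * real n) + b j)) [1..<s])
                          (rpowc q (of_real \<alpha>) #
                             map (\<lambda>j. rpowc q (of_real (c j * real n) + d j)) [1..<s])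
                          q (of_real (q ^ n) * z))
             (\<lambda>z. qhyp [] [rpowc q (of_real \<alpha>)] q z) sequentially)
       \<and> (\<forall>z::complex. z \<noteq> 0 \<longrightarrow>
           qhyp [] [rpowc q (of_real \<alpha>)] q z =
             ((- z) / (of_real ((q - 1)\<^sup>2) * rpowc q (of_real \<alpha>))) powr (of_real ((1 - \<alpha>) / 2))
             * qGamma q (of_real \<alpha>)
             * qBessel2 q (of_real (\<alpha> - 1)) (2 * csqrt (- z / rpowc q (of_real \<alpha>))))"
  proof (intro conjI allI impI)
  fix K :: "complex set" assume K: "compact K"
  show "uniform_limit K
             (\<lambda>n z. qhyp (rpowc q (- of_nat n) #
                             map (\<lambda>j. rpowc q (of_real (a j * real n) + b j)) [1..<s])
                          (rpowc q (of_real \<alpha>) #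
                             map (\<lambda>j. rpowc q (of_real (c j * real n) + d j)) [1..<s])
                          q (of_real (q ^ n) * z))
             (\<lambda>z. qhyp [] [rpowc q (of_real \<alpha>)] q z) sequentially"
    by (rule limit_part[OF q a c K])
next
  fix z :: complex assume z: "z \<noteq> 0"
  show "qhyp [] [rpowc q (of_real \<alpha>)] q z =
             ((- z) / (of_real ((q - 1)\<^sup>2) * rpowc q (of_real \<alpha>))) powr (of_real ((1 - \<alpha>) / 2))
             * qGamma q (of_real \<alpha>)
             * qBessel2 q (of_real (\<alpha> - 1)) (2 * csqrt (- z / rpowc q (of_real \<alpha>)))"
    by (rule bessel_part[OF q \<alpha> z])
qed

end
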